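(* Let $a,b,c,d,e,f,g,q,r,s,t,u,v,w$ be nonzero complex numbers with $a^3=bcdefg$, $w^3=qrstuv$ and $$\max(|q|,|r|,|s|,|t|,|u|,|v|,|w/q|,|w/r|,|w/s|,|w/t|,|w/u|,|w/v|)<1,$$ such that all expressions below are well defined. Then \begin{align*} &\sum_{k=-\infty}^\infty\frac{(1-aw^k)(1-a(w/tu)^k/(ef))(1-fg(uv/w)^k/a)(1-eg(tv/w)^k/a)}{(1-g(v/w)^k/a)(1-efg(tuv/w)^k/a)(1-a(w/u)^k/f)(1-a(w/t)^k/e)}\\ &\quad\times\frac{(b;q)_k(c;r)_k(d;s)_k(e;t)_k(f;u)_k(g;v)_k}{(a/b;w/q)_k(a/c;w/r)_k(a/d;w/s)_k(a/e;w/t)_k(a/f;w/u)_k(a/g;w/v)_k}\\ &\quad\times\Bigg[1-\frac{(1-a(w/rs)^k/(cd))(1-a(w/qs)^k/(bd))(1-a(w/qr)^k/(bc))}{(1-a(w/q)^k/b)(1-a(w/r)^k/c)(1-a(w/s)^k/d)}\\ &\qquad\qquad\times\frac{(1-et^k)(1-fu^k)(1-gv^k)}{(1-fg(uv/w)^k/a)(1-eg(tv/w)^k/a)(1-ef(tu/w)^k/a)}\Bigg]\\ &=\frac{(bw/(aq);w/q)_\infty(cw/(ar);w/r)_\infty(dw/(as);w/s)_\infty(ew/(at);w/t)_\infty(fw/(au);w/u)_\infty(gw/(av);w/v)_\infty}{(q/b;q)_\infty(r/c;r)_\infty(s/d;s)_\infty(t/e;t)_\infty(u/f;u)_\infty(v/g;v)_\infty}\\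 &\quad-\frac{(b;q)_\infty(c;r)_\infty(d;s)_\infty(e;t)_\infty(f;u)_\infty(g;v)_\infty}{(a/b;w/q)_\infty(a/c;w/r)_\infty(a/d;w/s)_\infty(a/e;w/t)_\infty(a/f;w/u)_\infty(a/g;w/v)_\infty}. \end{align*}
   Context: For $|q|<1$ and $x\in\mathbb C$, $(x;q)_\infty=\prod_{j\ge0}(1-xq^j)$, and for any integer $k$, $(x;q)_k=(x;q)_\infty/(xq^k;q)_\infty$ (so $(x;q)_k=\prod_{j=0}^{k-1}(1-xq^j)$ for $k\ge0$). Here e.g. $(w/tu)^k$ means $(w/(tu))^k$. The bilateral sum means $\lim_{m,n\to\infty}\sum_{k=-m}^n$. *)

theory Defs
  imports "HOL-Analysis.Analysis"
begin

definition qinf :: "complex \<Rightarrow> complex \<Rightarrow> complex" where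
  "qinf x q = (\<Prod>j. (1 - x * q ^ j))"

text \<open>(x;q)_k for integer k: the finite product for k >= 0; for k < 0 it is
  (x;q)_inf / (x q^k;q)_inf = 1 / prod_{j=1}^{-k} (1 - x q^(-j)).\<close>
definition qpoch :: "complex \<Rightarrow> complex \<Rightarrow> int \<Rightarrow> complex" where
  "qpoch x q k = (if 0 \<le> k then (\<Prod>j<nat k. (1 - x * q ^ j))
                  else 1 / (\<Prod>j\<in>{1..nat (- k)}. (1 - x / q ^ j)))"

definition qpoch_ok :: "complex \<Rightarrow> complex \<Rightarrow> int \<Rightarrow> bool" where
  "qpoch_ok x q k = (k < 0 \<longrightarrow> (\<Prod>j\<in>{1..nat (- k)}. (1 - x / q ^ j)) \<noteq> 0)"

definition bilateral_sums :: "(int \<Rightarrow> complex) \<Rightarrow> complex \<Rightarrow> bool" where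
  "bilateral_sums F L =
     (((\<lambda>(m::nat, n::nat). \<Sum>k\<in>{- int m..int n}. F k) \<longlongrightarrow> L)
        (sequentially \<times>\<^sub>F sequentially))"

end

theory Submission
  imports Defs
begin

lemma poly1: fixes A P E F :: complex shows
 "(1-A)*(E*F-A)*(P*E-A^2)*(P*F-A^2) - (P*E*F-A^2)*(P-A^2)*(F-A)*(E-A) = A*(-(P-A))*(1-E)*(1-F)*(P*E*F-A^3)"
  by algebra
lemma poly2: fixes A B C D :: complex shows
 "(1-A)*((C*D-A)*(B*D-A)*(B*C-A)) - A*(B*C*D-A^2)*((1-B)*(1-C)*(1-D)) = (B*C*D-A)*(B-A)*(C-A)*(D-A)"
  by algebra
lemma atoms: fixes A a1 u y1 y2 h p2 fA eA bA cA dA T3 e1 f1 g3 m p :: complex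
  assumes nz: "A \<noteq> 0" "u \<noteq> 0" "y1 \<noteq> 0" "y2 \<noteq> 0" "h \<noteq> 0" "p2 \<noteq> 0" "fA \<noteq> 0" "eA \<noteq> 0" "bA \<noteq> 0" "cA \<noteq> 0" "dA \<noteq> 0"
  and r1: "a1*u*y1*y2 - h*p2*fA*eA = A*(-p)*e1*f1*g3"
  and r2: "a1*T3 - A*p2*m = p*bA*cA*dA"
  shows "a1*u*y1*y2/(h*p2*fA*eA) * (1 - T3*e1*f1*g3*A/(bA*cA*dA*y1*y2*(-u)))
     = 1 - m*e1*f1*g3*A^2/(bA*cA*dA*eA*fA*(-h))"
proof -
  have "a1*u*y1*y2*(bA*cA*dA) + a1*T3*e1*f1*g3*A = h*p2*fA*eA*(bA*cA*dA) + m*e1*f1*g3*A^2*p2"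
  proof -
    have "a1*u*y1*y2*(bA*cA*dA) + a1*T3*e1*f1*g3*A - (h*p2*fA*eA*(bA*cA*dA) + m*e1*f1*g3*A^2*p2)
       = (a1*u*y1*y2 - h*p2*fA*eA)*(bA*cA*dA) + (a1*T3 - A*p2*m)*e1*f1*g3*A"
      by (simp add: algebra_simps power2_eq_square)
    also have "\<dots> = 0" unfolding r1 r2 by (simp add: algebra_simps)
    finally show ?thesis by simp
  qed
  moreover have "a1*u*y1*y2/(h*p2*fA*eA) * (1 - T3*e1*f1*g3*A/(bA*cA*dA*y1*y2*(-u)))
     = (a1*u*y1*y2*(bA*cA*dA) + a1*T3*e1*f1*g3*A)/(h*p2*fA*eA*(bA*cA*dA))"
    using nz by (simp add: field_simps)
  moreover have "1 - m*e1*f1*g3*A^2/(bA*cA*dA*eA*fA*(-h)) = (h*p2*fA*eA*(bA*cA*dA) + m*e1*f1*g3*A^2*p2)/(h*p2*fA*eA*(bA*cA*dA))"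
    using nz by (simp add: field_simps)
  ultimately show ?thesis by simp
qed

lemma closed_Af: fixes A E F P a1 u y1 y2 h p2 fA eA :: complex
  assumes "A \<noteq> 0" "E \<noteq> 0" "F \<noteq> 0" "P \<noteq> 0" "h \<noteq> 0" "p2 \<noteq> 0" "fA \<noteq> 0" "eA \<noteq> 0"
  shows "a1*(u/(E*F))*(y1/(P*E))*(y2/(P*F)) / ((h/(P*E*F))*(p2/P)*(fA/F)*(eA/E)) = a1*u*y1*y2/(h*p2*fA*eA)"
  using assms by (simp add: field_simps)

lemma closed_Br: fixes A B C D E F P cd bd bc bA cA dA e1 f1 g3 y1 y2 u :: complex
  assumes "A \<noteq> 0" "B \<noteq> 0" "C \<noteq> 0" "D \<noteq> 0" "E \<noteq> 0" "F \<noteq> 0" "P = B*C*D"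
    "bA \<noteq> 0" "cA \<noteq> 0" "dA \<noteq> 0" "y1 \<noteq> 0" "y2 \<noteq> 0" "u \<noteq> 0"
  shows "(cd/(C*D))*(bd/(B*D))*(bc/(B*C)) / ((bA/B)*(cA/C)*(dA/D))
     * (e1*f1*(g3/(P*E*F))) / ((y1/(P*E))*(y2/(P*F))*(-u/A))
     = (cd*bd*bc)*e1*f1*g3*A/(bA*cA*dA*y1*y2*(-u))"
  using assms by (simp add: field_simps power2_eq_square)

lemma closed_R: fixes A B C D E F P b1 c1 d1 e1 f1 g3 bA cA dA eA fA h :: complex
  assumes "A \<noteq> 0" "B \<noteq> 0" "C \<noteq> 0" "D \<noteq> 0" "E \<noteq> 0" "F \<noteq> 0" "P = B*C*D"
    "bA \<noteq> 0" "cA \<noteq> 0" "dA \<noteq> 0" "eA \<noteq> 0" "fA \<noteq> 0" "h \<noteq> 0"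
  shows "b1*c1*d1*e1*f1*(g3/(P*E*F)) / ((bA/B)*(cA/C)*(dA/D)*(eA/E)*(fA/F)*(-h/A^2))
     = (b1*c1*d1)*e1*f1*g3*A^2/(bA*cA*dA*eA*fA*(-h))"
  using assms by (simp add: field_simps power2_eq_square)

lemma key:
  fixes A B C D E F G :: complex
  assumes nz: "A \<noteq> 0" "B \<noteq> 0" "C \<noteq> 0" "D \<noteq> 0" "E \<noteq> 0" "F \<noteq> 0" "G \<noteq> 0"
  and bal: "A^3 = B*C*D*E*F*G"
  and d: "1 - G/A \<noteq> 0" "1 - E*F*G/A \<noteq> 0" "1 - A/F \<noteq> 0" "1 - A/E \<noteq> 0"
     "1 - A/B \<noteq> 0" "1 - A/C \<noteq> 0" "1 - A/D \<noteq> 0" "1 - A/G \<noteq> 0"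
     "1 - F*G/A \<noteq> 0" "1 - E*G/A \<noteq> 0" "1 - E*F/A \<noteq> 0"
  shows "((1-A)*(1-A/(E*F))*(1-F*G/A)*(1-E*G/A))/((1-G/A)*(1-E*F*G/A)*(1-A/F)*(1-A/E))
     * (1 - ((1-A/(C*D))*(1-A/(B*D))*(1-A/(B*C)))/((1-A/B)*(1-A/C)*(1-A/D))
          * ((1-E)*(1-F)*(1-G))/((1-F*G/A)*(1-E*G/A)*(1-E*F/A)))
     = 1 - ((1-B)*(1-C)*(1-D)*(1-E)*(1-F)*(1-G))/((1-A/B)*(1-A/C)*(1-A/D)*(1-A/E)*(1-A/F)*(1-A/G))"
proof -
  have GG: "G = A^3/(B*C*D*E*F)" using bal nz by (simp add: field_simps)
  have f1: "1 - A/(E*F) = (E*F-A)/(E*F)" using nz by (simp add: field_simps)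
  have f2: "1 - F*G/A = (B*C*D*E - A^2)/(B*C*D*E)" using nz unfolding GG by (simp add: field_simps power2_eq_square power3_eq_cube)
  have f3: "1 - E*G/A = (B*C*D*F - A^2)/(B*C*D*F)" using nz unfolding GG by (simp add: field_simps power2_eq_square power3_eq_cube)
  have f4: "1 - G/A = (B*C*D*E*F - A^2)/(B*C*D*E*F)" using nz unfolding GG by (simp add: field_simps power2_eq_square power3_eq_cube)
  have f5: "1 - E*F*G/A = (B*C*D - A^2)/(B*C*D)" using nz unfolding GG by (simp add: field_simps power2_eq_square power3_eq_cube)
  have f6: "\<And>X. X \<noteq> 0 \<Longrightarrow> 1 - A/X = (X - A)/X" by (simp add: field_simps)
  have f7: "1 - E*F/A = -(E*F-A)/A" using nz by (simp add: field_simps)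
  have f8: "1 - G = (B*C*D*E*F - A^3)/(B*C*D*E*F)" using nz unfolding GG by (simp add: field_simps)
  have f9: "1 - A/G = -(B*C*D*E*F - A^2)/A^2" using nz unfolding GG by (simp add: field_simps power2_eq_square power3_eq_cube)
  have f10: "1 - A/(C*D) = (C*D-A)/(C*D)" "1 - A/(B*D) = (B*D-A)/(B*D)" "1 - A/(B*C) = (B*C-A)/(B*C)"
    using nz by (simp_all add: field_simps)
  have nzu: "E*F - A \<noteq> 0" using d(11) f7 nz by auto
  have nzy1: "B*C*D*E - A^2 \<noteq> 0" using d(9) f2 nz by auto
  have nzy2: "B*C*D*F - A^2 \<noteq> 0" using d(10) f3 nz by auto
  have nzh: "B*C*D*E*F - A^2 \<noteq> 0" using d(1) f4 nz by auto
  have nzp2: "B*C*D - A^2 \<noteq> 0" using d(2) f5 nz by auto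
  have nzX: "F - A \<noteq> 0" "E - A \<noteq> 0" "B - A \<noteq> 0" "C - A \<noteq> 0" "D - A \<noteq> 0"
    using d(3-7) nz by (auto simp: f6)
  have eAf: "((1-A)*(1-A/(E*F))*(1-F*G/A)*(1-E*G/A))/((1-G/A)*(1-E*F*G/A)*(1-A/F)*(1-A/E))
     = (1-A)*(E*F-A)*(B*C*D*E - A^2)*(B*C*D*F - A^2)/((B*C*D*E*F - A^2)*(B*C*D - A^2)*(F-A)*(E-A))"
    unfolding f1 f2 f3 f4 f5 f6[OF nz(5)] f6[OF nz(6)]
    by (rule closed_Af) (use nz nzh nzp2 nzX in auto)
  have eBr: "((1-A/(C*D))*(1-A/(B*D))*(1-A/(B*C)))/((1-A/B)*(1-A/C)*(1-A/D))
          * ((1-E)*(1-F)*(1-G))/((1-F*G/A)*(1-E*G/A)*(1-E*F/A))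
     = ((C*D-A)*(B*D-A)*(B*C-A))*(1-E)*(1-F)*(B*C*D*E*F - A^3)*A/((B-A)*(C-A)*(D-A)*(B*C*D*E - A^2)*(B*C*D*F - A^2)*(-(E*F-A)))"
    unfolding f10 f2 f3 f7 f8 f6[OF nz(2)] f6[OF nz(3)] f6[OF nz(4)]
    by (rule closed_Br) (use nz nzu nzy1 nzy2 nzX in auto)
  have eR: "((1-B)*(1-C)*(1-D)*(1-E)*(1-F)*(1-G))/((1-A/B)*(1-A/C)*(1-A/D)*(1-A/E)*(1-A/F)*(1-A/G))
     = ((1-B)*(1-C)*(1-D))*(1-E)*(1-F)*(B*C*D*E*F - A^3)*A^2/((B-A)*(C-A)*(D-A)*(E-A)*(F-A)*(-(B*C*D*E*F - A^2)))"
    unfolding f8 f9 f6[OF nz(2)] f6[OF nz(3)] f6[OF nz(4)] f6[OF nz(5)] f6[OF nz(6)]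
    by (rule closed_R) (use nz nzh nzX in auto)
  show ?thesis unfolding eAf eBr eR
    by (rule atoms) (use nz nzu nzy1 nzy2 nzh nzp2 nzX poly1 poly2 in auto)
qed
lemma div6: fixes a1 a2 a3 a4 a5 a6 b1 b2 b3 b4 b5 b6 :: complex shows
 "(a1*a2*a3*a4*a5*a6)/(b1*b2*b3*b4*b5*b6) = (a1/b1)*(a2/b2)*(a3/b3)*(a4/b4)*(a5/b5)*(a6/b6)"
  by (simp add: times_divide_times_eq)
lemma split6: fixes a1 a2 a3 a4 a5 a6 y1 y2 y3 y4 y5 y6 :: complex shows
 "(a1*y1)*(a2*y2)*(a3*y3)*(a4*y4)*(a5*y5)*(a6*y6) = (a1*a2*a3*a4*a5*a6)*(y1*y2*y3*y4*y5*y6)"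
  by (simp add: ac_simps)
lemma split6d: fixes a1 a2 a3 a4 a5 a6 b1 b2 b3 b4 b5 b6 y1 y2 y3 y4 y5 y6 z1 z2 z3 z4 z5 z6 :: complex shows
 "((a1*y1)*(a2*y2)*(a3*y3)*(a4*y4)*(a5*y5)*(a6*y6)) / ((b1*z1)*(b2*z2)*(b3*z3)*(b4*z4)*(b5*z5)*(b6*z6))
   = (a1*a2*a3*a4*a5*a6)/(b1*b2*b3*b4*b5*b6) * ((y1*y2*y3*y4*y5*y6)/(z1*z2*z3*z4*z5*z6))"
  by (simp only: split6 times_divide_times_eq)
lemma pre1: fixes a b c d e f g q r s t u v w :: complex
  assumes nz: "a \<noteq> 0" "b \<noteq> 0" "c \<noteq> 0" "d \<noteq> 0" "e \<noteq> 0" "f \<noteq> 0" "g \<noteq> 0"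
              "q \<noteq> 0" "r \<noteq> 0" "s \<noteq> 0" "t \<noteq> 0" "u \<noteq> 0" "v \<noteq> 0" "w \<noteq> 0"
    and bal: "a ^ 3 = b * c * d * e * f * g" "w ^ 3 = q * r * s * t * u * v"
  shows "(a/b)*q^j/(b*(w/q)^j) * ((a/c)*r^j/(c*(w/r)^j)) * ((a/d)* s^j/(d*(w/s)^j))
       * ((a/e)*t^j/(e*(w/t)^j)) * ((a/f)*u^j/(f*(w/u)^j)) * ((a/g)* v^j/(g*(w/v)^j)) = 1"
proof -
  have "(a/b)*q^j/(b*(w/q)^j) * ((a/c)*r^j/(c*(w/r)^j)) * ((a/d)* s^j/(d*(w/s)^j))
       * ((a/e)*t^j/(e*(w/t)^j)) * ((a/f)*u^j/(f*(w/u)^j)) * ((a/g)* v^j/(g*(w/v)^j))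
     = (a^3)^2 * ((q*r* s*t*u* v)^j)^2 / ((b*c*d*e*f*g)^2 * ((w^3)^j)^2)"
    using nz by (simp add: field_simps power_mult_distrib power_divide power2_eq_square power3_eq_cube)
  also have "\<dots> = 1" unfolding bal using nz by simp
  finally show ?thesis .
qed
lemma qpoch_neg: "qpoch x p (- int m) = 1 / (\<Prod>j\<in>{1..m}. (1 - x / p ^ j))"
  by (cases "m = 0") (auto simp: qpoch_def)

lemma qpoch_nat: "qpoch x p (int n) = (\<Prod>j<n. (1 - x * p ^ j))"
  by (simp add: qpoch_def)

lemma gen1: "(a::complex) \<noteq> 0 \<Longrightarrow> b \<noteq> 0 \<Longrightarrow> 1 / a = 1 / (a * b) * b"
  by simp

lemma qpoch_succ:
  assumes p: "p \<noteq> 0" and ok: "qpoch_ok x p k"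
  shows "qpoch x p (k + 1) = qpoch x p k * (1 - x * p powi k)"
proof (cases "0 \<le> k")
  case True
  then obtain n where k: "k = int n" by (metis nonneg_eq_int)
  have "k + 1 = int (Suc n)" using k by simp
  then show ?thesis unfolding k by (simp only: qpoch_nat) (simp add: k)
next
  case False
  define n where "n = nat (- k) - 1"
  have k: "k = - int (Suc n)" using False unfolding n_def by simp
  have k1: "k + 1 = - int n" using k by simp
  have ne: "(\<Prod>j\<in>{1..Suc n}. (1 - x / p ^ j)) \<noteq> 0"
  proof -
    have nk: "nat (- k) = Suc n" using k by simp
    have "(\<Prod>j\<in>{1..nat (- k)}. (1 - x / p ^ j)) \<noteq> 0" using ok False unfolding qpoch_ok_def by auto
    then show ?thesis unfolding nk .
  qed
  have split: "(\<Prod>j\<in>{1..Suc n}. (1 - x / p ^ j)) = (\<Prod>j\<in>{1..n}. (1 - x / p ^ j)) * (1 - x / p ^ Suc n)"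
    by (simp add: atLeastAtMostSuc_conv mult.commute)
  have pw0: "p powi (- int (Suc n)) = inverse (p ^ Suc n)" by (simp only: power_int_minus power_int_of_nat)
  have pw: "x * p powi k = x / p ^ Suc n" unfolding k pw0 by (simp add: divide_inverse)
  have n1: "(\<Prod>j\<in>{1..n}. (1 - x / p ^ j)) \<noteq> 0" "1 - x / p ^ Suc n \<noteq> 0" using ne split by auto
  show ?thesis unfolding k1 pw qpoch_neg unfolding k qpoch_neg split by (rule gen1) (use n1 in auto)
qed

lemma qinf_lim:
  assumes "norm p < 1"
  shows "(\<lambda>n. \<Prod>j<n. (1 - x * p ^ j)) \<longlonglongrightarrow> qinf x p"
proof -
  have "summable (\<lambda>j. norm ((1 - x * p ^ j) - 1))"
    using assms by (simp add: norm_mult norm_power summable_mult summable_geometric)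
  then have "convergent_prod (\<lambda>j. 1 - x * p ^ j)"
    by (intro abs_convergent_prod_imp_convergent_prod summable_imp_abs_convergent_prod)
  then have "(\<lambda>n. \<Prod>j\<le>n. (1 - x * p ^ j)) \<longlonglongrightarrow> qinf x p"
    unfolding qinf_def by (rule convergent_prod_LIMSEQ)
  then have "(\<lambda>n. \<Prod>j<Suc n. (1 - x * p ^ j)) \<longlonglongrightarrow> qinf x p"
    by (simp add: lessThan_Suc_atMost)
  then show ?thesis by (rule LIMSEQ_imp_Suc)
qed

lemma qpoch_pos_lim: "norm p < 1 \<Longrightarrow> (\<lambda>n. qpoch x p (int n)) \<longlonglongrightarrow> qinf x p"
  unfolding qpoch_nat by (rule qinf_lim)

lemma negdiv: fixes A B X Y :: complex shows "(-A*X)/(-B*Y) = (A/B)*(X/Y)"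
  by (simp add: times_divide_times_eq)

lemma regroup: fixes P1 N M a X Y :: complex shows "(P1*(N/M))*(a*(X/Y)) = (P1*a)*((N*X)/(M*Y))"
  by (simp add: times_divide_times_eq ac_simps)

lemma negpair0:
  fixes x p y r :: complex
  assumes "x \<noteq> 0" "p \<noteq> 0" "y \<noteq> 0" "r \<noteq> 0"
  shows "(\<Prod>j\<in>{1..m}. (1 - y / r ^ j)) / (\<Prod>j\<in>{1..m}. (1 - x / p ^ j))
    = (\<Prod>j\<in>{1..m}. y * p ^ j / (x * r ^ j)) * ((\<Prod>j<m. (1 - (r / y) * r ^ j)) / (\<Prod>j<m. (1 - (p / x) * p ^ j)))"
proof (induction m)
  case 0 then show ?case by simp
next
  case (Suc m)
  have f: "(1 - y / r ^ Suc m) / (1 - x / p ^ Suc m)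
      = (y * p ^ Suc m / (x * r ^ Suc m)) * ((1 - (r / y) * r ^ m) / (1 - (p / x) * p ^ m))"
  proof -
    have n: "1 - y / r ^ Suc m = -(y / r ^ Suc m) * (1 - (r / y) * r ^ m)" using assms by (simp add: field_simps)
    have d: "1 - x / p ^ Suc m = -(x / p ^ Suc m) * (1 - (p / x) * p ^ m)" using assms by (simp add: field_simps)
    have c: "(y / r ^ Suc m) / (x / p ^ Suc m) = y * p ^ Suc m / (x * r ^ Suc m)" using assms by (simp add: field_simps)
    show ?thesis unfolding n d c[symmetric] by (rule negdiv)
  qed
  have s1: "\<And>g :: nat \<Rightarrow> complex. (\<Prod>j\<in>{1..Suc m}. g j) = (\<Prod>j\<in>{1..m}. g j) * g (Suc m)"
    by (simp add: atLeastAtMostSuc_conv mult.commute)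
  have s2: "\<And>g :: nat \<Rightarrow> complex. (\<Prod>j<Suc m. g j) = (\<Prod>j<m. g j) * g m"
    by simp
  have "(\<Prod>j\<in>{1..Suc m}. (1 - y / r ^ j)) / (\<Prod>j\<in>{1..Suc m}. (1 - x / p ^ j))
      = ((\<Prod>j\<in>{1..m}. (1 - y / r ^ j)) / (\<Prod>j\<in>{1..m}. (1 - x / p ^ j))) * ((1 - y / r ^ Suc m) / (1 - x / p ^ Suc m))"
    unfolding s1 by (rule times_divide_times_eq[symmetric])
  also have "\<dots> = (\<Prod>j\<in>{1..Suc m}. y * p ^ j / (x * r ^ j)) * ((\<Prod>j<Suc m. (1 - (r / y) * r ^ j)) / (\<Prod>j<Suc m. (1 - (p / x) * p ^ j)))"
    unfolding Suc.IH f s1 s2 by (rule regroup)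
  finally show ?case .
qed

lemma negpair:
  fixes x p y r :: complex
  assumes "x \<noteq> 0" "p \<noteq> 0" "y \<noteq> 0" "r \<noteq> 0"
  shows "qpoch x p (- int m) / qpoch y r (- int m)
    = (\<Prod>j\<in>{1..m}. y * p ^ j / (x * r ^ j)) * ((\<Prod>j<m. (1 - (r / y) * r ^ j)) / (\<Prod>j<m. (1 - (p / x) * p ^ j)))"
  unfolding qpoch_neg negpair0[OF assms, symmetric] by simp

lemma bilateral_tele:
  fixes F P :: "int \<Rightarrow> complex"
  assumes st: "\<And>k. F k = P k - P (k + 1)"
    and l2: "(\<lambda>n. P (int n)) \<longlonglongrightarrow> L2" and l1: "(\<lambda>m. P (- int m)) \<longlonglongrightarrow> L1"
  shows "bilateral_sums F (L1 - L2)"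
proof -
  have tel: "(\<Sum>k\<in>{lo..lo + int d - 1}. F k) = P lo - P (lo + int d)" for lo d
  proof (induction d)
    case 0 then show ?case by simp
  next
    case (Suc d)
    have "{lo..lo + int (Suc d) - 1} = insert (lo + int d) {lo..lo + int d - 1}" by auto
    then show ?case using Suc by (simp add: st ac_simps)
  qed
  have eq: "(\<lambda>(m::nat, n::nat). \<Sum>k\<in>{- int m..int n}. F k) = (\<lambda>x. P (- int (fst x)) - P (int (snd x) + 1))"
  proof
    fix x :: "nat \<times> nat"
    obtain m n where x: "x = (m, n)" by (cases x)
    have "(\<Sum>k\<in>{- int m..int n}. F k) = P (- int m) - P (- int m + int (m + n + 1))"
      using tel[of "- int m" "m + n + 1"] by simp
    then show "(case x of (m, n) \<Rightarrow> \<Sum>k\<in>{- int m..int n}. F k) = P (- int (fst x)) - P (int (snd x) + 1)"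
      by (simp add: x add.commute)
  qed
  have a: "((\<lambda>x. P (- int (fst x))) \<longlongrightarrow> L1) (sequentially \<times>\<^sub>F sequentially)"
    by (rule filterlim_compose[OF l1 filterlim_fst])
  have l2': "(\<lambda>n. P (int n + 1)) \<longlonglongrightarrow> L2"
    using LIMSEQ_Suc[OF l2] by (simp add: add.commute)
  have b: "((\<lambda>x. P (int (snd x) + 1)) \<longlongrightarrow> L2) (sequentially \<times>\<^sub>F sequentially)"
    by (rule filterlim_compose[OF l2' filterlim_snd])
  show ?thesis unfolding bilateral_sums_def by (subst eq) (rule tendsto_diff[OF a b])
qed

lemma mlc: fixes x y z :: complex shows "x * y * z = y * (x * z)" by (simp add: ac_simps)
lemma md: fixes y r :: complex shows "y * (1 - r) = y - y * r" by (simp add: algebra_simps)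

lemma tendsto_mult6:
  fixes f1 f2 f3 f4 f5 f6 :: "nat \<Rightarrow> complex"
  assumes "f1 \<longlonglongrightarrow> l1" "f2 \<longlonglongrightarrow> l2" "f3 \<longlonglongrightarrow> l3" "f4 \<longlonglongrightarrow> l4" "f5 \<longlonglongrightarrow> l5" "f6 \<longlonglongrightarrow> l6"
  shows "(\<lambda>n. f1 n * f2 n * f3 n * f4 n * f5 n * f6 n) \<longlonglongrightarrow> l1 * l2 * l3 * l4 * l5 * l6"
  by (intro tendsto_mult assms)

lemma step_lemma:
  fixes a b c d e f g q r s t u v w :: complex
  assumes nz: "a \<noteq> 0" "b \<noteq> 0" "c \<noteq> 0" "d \<noteq> 0" "e \<noteq> 0" "f \<noteq> 0" "g \<noteq> 0"
              "q \<noteq> 0" "r \<noteq> 0" "s \<noteq> 0" "t \<noteq> 0" "u \<noteq> 0" "v \<noteq> 0" "w \<noteq> 0"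
    and bal: "a ^ 3 = b * c * d * e * f * g" "w ^ 3 = q * r * s * t * u * v"
    and wd_num: "\<And>k::int. qpoch_ok b q k \<and> qpoch_ok c r k \<and> qpoch_ok d s k \<and>
                           qpoch_ok e t k \<and> qpoch_ok f u k \<and> qpoch_ok g v k"
    and wd_den: "\<And>k::int.
        qpoch_ok (a / b) (w / q) k \<and> qpoch (a / b) (w / q) k \<noteq> 0 \<and>
        qpoch_ok (a / c) (w / r) k \<and> qpoch (a / c) (w / r) k \<noteq> 0 \<and>
        qpoch_ok (a / d) (w / s) k \<and> qpoch (a / d) (w / s) k \<noteq> 0 \<and>
        qpoch_ok (a / e) (w / t) k \<and> qpoch (a / e) (w / t) k \<noteq> 0 \<and>
        qpoch_ok (a / f) (w / u) k \<and> qpoch (a / f) (w / u) k \<noteq> 0 \<and>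
        qpoch_ok (a / g) (w / v) k \<and> qpoch (a / g) (w / v) k \<noteq> 0"
    and wd_fac: "\<And>k::int.
        1 - g * (v / w) powi k / a \<noteq> 0 \<and>
        1 - e * f * g * (t * u * v / w) powi k / a \<noteq> 0 \<and>
        1 - a * (w / u) powi k / f \<noteq> 0 \<and>
        1 - a * (w / t) powi k / e \<noteq> 0 \<and>
        1 - a * (w / q) powi k / b \<noteq> 0 \<and>
        1 - a * (w / r) powi k / c \<noteq> 0 \<and>
        1 - a * (w / s) powi k / d \<noteq> 0 \<and>
        1 - f * g * (u * v / w) powi k / a \<noteq> 0 \<and>
        1 - e * g * (t * v / w) powi k / a \<noteq> 0 \<and>
        1 - e * f * (t * u / w) powi k / a \<noteq> 0"
  shows "((1 - a * w powi k) * (1 - a * (w / (t * u)) powi k / (e * f))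
        * (1 - f * g * (u * v / w) powi k / a) * (1 - e * g * (t * v / w) powi k / a))
      / ((1 - g * (v / w) powi k / a) * (1 - e * f * g * (t * u * v / w) powi k / a)
        * (1 - a * (w / u) powi k / f) * (1 - a * (w / t) powi k / e))
      * ((qpoch b q k * qpoch c r k * qpoch d s k * qpoch e t k * qpoch f u k * qpoch g v k)
        / (qpoch (a / b) (w / q) k * qpoch (a / c) (w / r) k * qpoch (a / d) (w / s) k
           * qpoch (a / e) (w / t) k * qpoch (a / f) (w / u) k * qpoch (a / g) (w / v) k))
      * (1 - ((1 - a * (w / (r * s)) powi k / (c * d)) * (1 - a * (w / (q * s)) powi k / (b * d))
                * (1 - a * (w / (q * r)) powi k / (b * c)))
             / ((1 - a * (w / q) powi k / b) * (1 - a * (w / r) powi k / c)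
                * (1 - a * (w / s) powi k / d))
           * ((1 - e * t powi k) * (1 - f * u powi k) * (1 - g * v powi k))
             / ((1 - f * g * (u * v / w) powi k / a) * (1 - e * g * (t * v / w) powi k / a)
                * (1 - e * f * (t * u / w) powi k / a)))
    = ((qpoch b q k * qpoch c r k * qpoch d s k * qpoch e t k * qpoch f u k * qpoch g v k) / (qpoch (a / b) (w / q) k * qpoch (a / c) (w / r) k * qpoch (a / d) (w / s) k * qpoch (a / e) (w / t) k * qpoch (a / f) (w / u) k * qpoch (a / g) (w / v) k)) - ((qpoch b q (k + 1) * qpoch c r (k + 1) * qpoch d s (k + 1) * qpoch e t (k + 1) * qpoch f u (k + 1) * qpoch g v (k + 1)) / (qpoch (a / b) (w / q) (k + 1) * qpoch (a / c) (w / r) (k + 1) * qpoch (a / d) (w / s) (k + 1) * qpoch (a / e) (w / t) (k + 1) * qpoch (a / f) (w / u) (k + 1) * qpoch (a / g) (w / v) (k + 1)))"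
proof -
  define BB where "BB = b * q powi k"
  define CC where "CC = c * r powi k"
  define DD where "DD = d * s powi k"
  define EE where "EE = e * t powi k"
  define FF where "FF = f * u powi k"
  define GG where "GG = g * v powi k"
  define AA where "AA = a * w powi k"
  have nzs: "AA \<noteq> 0" "BB \<noteq> 0" "CC \<noteq> 0" "DD \<noteq> 0" "EE \<noteq> 0" "FF \<noteq> 0" "GG \<noteq> 0"
    using nz by (simp_all add: AA_def BB_def CC_def DD_def EE_def FF_def GG_def)
  have rfs: "a * w powi k = AA"
    "a * (w / (t * u)) powi k / (e * f) = AA / (EE * FF)"
    "f * g * (u * v / w) powi k / a = FF * GG / AA"
    "e * g * (t * v / w) powi k / a = EE * GG / AA"
    "g * (v / w) powi k / a = GG / AA"
    "e * f * g * (t * u * v / w) powi k / a = EE * FF * GG / AA"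
    "a * (w / u) powi k / f = AA / FF"
    "a * (w / t) powi k / e = AA / EE"
    "a * (w / (r * s)) powi k / (c * d) = AA / (CC * DD)"
    "a * (w / (q * s)) powi k / (b * d) = AA / (BB * DD)"
    "a * (w / (q * r)) powi k / (b * c) = AA / (BB * CC)"
    "a * (w / q) powi k / b = AA / BB"
    "a * (w / r) powi k / c = AA / CC"
    "a * (w / s) powi k / d = AA / DD"
    "e * t powi k = EE"
    "f * u powi k = FF"
    "g * v powi k = GG"
    "e * f * (t * u / w) powi k / a = EE * FF / AA"
    using nz by (simp_all add: AA_def BB_def CC_def DD_def EE_def FF_def GG_def power_int_divide_distrib power_int_mult_distrib field_simps)
  have rat: "a / b * (w / q) powi k = AA / BB"
    "a / c * (w / r) powi k = AA / CC"
    "a / d * (w / s) powi k = AA / DD"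
    "a / e * (w / t) powi k = AA / EE"
    "a / f * (w / u) powi k = AA / FF"
    "a / g * (w / v) powi k = AA / GG"
    using nz by (simp_all add: AA_def BB_def CC_def DD_def EE_def FF_def GG_def power_int_divide_distrib field_simps)
  have W3: "(w powi k) ^ 3 = q powi k * r powi k * s powi k * t powi k * u powi k * v powi k"
  proof -
    have "(w powi k) ^ 3 = w powi (k * 3)" by (simp add: power_int_power')
    also have "\<dots> = (w ^ 3) powi k" by (simp add: power_int_power mult.commute)
    also have "\<dots> = (q * r * s * t * u * v) powi k" using bal(2) by simp
    also have "\<dots> = q powi k * r powi k * s powi k * t powi k * u powi k * v powi k" by (simp add: power_int_mult_distrib)
    finally show ?thesis .
  qed
  have bal': "AA ^ 3 = BB * CC * DD * EE * FF * GG"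
  proof -
    have "AA ^ 3 = a ^ 3 * (w powi k) ^ 3" by (simp add: AA_def power_mult_distrib)
    also have "\<dots> = (b * c * d * e * f * g) * (q powi k * r powi k * s powi k * t powi k * u powi k * v powi k)" using bal(1) W3 by simp
    also have "\<dots> = BB * CC * DD * EE * FF * GG" by (simp add: AA_def BB_def CC_def DD_def EE_def FF_def GG_def ac_simps)
    finally show ?thesis .
  qed
  have recNBB: "qpoch b q (k + 1) = qpoch b q k * (1 - BB)"
    unfolding BB_def by (rule qpoch_succ) (use nz wd_num[of k] in auto)
  have recDBB: "qpoch (a / b) (w / q) (k + 1) = qpoch (a / b) (w / q) k * (1 - AA / BB)"
    unfolding rat(1)[symmetric] by (rule qpoch_succ) (use nz wd_den[of k] in auto)
  have recNCC: "qpoch c r (k + 1) = qpoch c r k * (1 - CC)"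
    unfolding CC_def by (rule qpoch_succ) (use nz wd_num[of k] in auto)
  have recDCC: "qpoch (a / c) (w / r) (k + 1) = qpoch (a / c) (w / r) k * (1 - AA / CC)"
    unfolding rat(2)[symmetric] by (rule qpoch_succ) (use nz wd_den[of k] in auto)
  have recNDD: "qpoch d s (k + 1) = qpoch d s k * (1 - DD)"
    unfolding DD_def by (rule qpoch_succ) (use nz wd_num[of k] in auto)
  have recDDD: "qpoch (a / d) (w / s) (k + 1) = qpoch (a / d) (w / s) k * (1 - AA / DD)"
    unfolding rat(3)[symmetric] by (rule qpoch_succ) (use nz wd_den[of k] in auto)
  have recNEE: "qpoch e t (k + 1) = qpoch e t k * (1 - EE)"
    unfolding EE_def by (rule qpoch_succ) (use nz wd_num[of k] in auto)
  have recDEE: "qpoch (a / e) (w / t) (k + 1) = qpoch (a / e) (w / t) k * (1 - AA / EE)"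
    unfolding rat(4)[symmetric] by (rule qpoch_succ) (use nz wd_den[of k] in auto)
  have recNFF: "qpoch f u (k + 1) = qpoch f u k * (1 - FF)"
    unfolding FF_def by (rule qpoch_succ) (use nz wd_num[of k] in auto)
  have recDFF: "qpoch (a / f) (w / u) (k + 1) = qpoch (a / f) (w / u) k * (1 - AA / FF)"
    unfolding rat(5)[symmetric] by (rule qpoch_succ) (use nz wd_den[of k] in auto)
  have recNGG: "qpoch g v (k + 1) = qpoch g v k * (1 - GG)"
    unfolding GG_def by (rule qpoch_succ) (use nz wd_num[of k] in auto)
  have recDGG: "qpoch (a / g) (w / v) (k + 1) = qpoch (a / g) (w / v) k * (1 - AA / GG)"
    unfolding rat(6)[symmetric] by (rule qpoch_succ) (use nz wd_den[of k] in auto)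
  have dG: "1 - AA / GG \<noteq> 0"
  proof -
    have "qpoch (a / g) (w / v) (k + 1) \<noteq> 0" using wd_den[of "k + 1"] by blast
    then show ?thesis unfolding recDGG by simp
  qed
  have w1: "1 - GG / AA \<noteq> 0 \<and> 1 - EE * FF * GG / AA \<noteq> 0 \<and> 1 - AA / FF \<noteq> 0 \<and> 1 - AA / EE \<noteq> 0 \<and>
     1 - AA / BB \<noteq> 0 \<and> 1 - AA / CC \<noteq> 0 \<and> 1 - AA / DD \<noteq> 0 \<and>
     1 - FF * GG / AA \<noteq> 0 \<and> 1 - EE * GG / AA \<noteq> 0 \<and> 1 - EE * FF / AA \<noteq> 0"
    using wd_fac[of k] unfolding rfs .
  have K: "((1-AA)*(1-AA/(EE*FF))*(1-FF*GG/AA)*(1-EE*GG/AA))/((1-GG/AA)*(1-EE*FF*GG/AA)*(1-AA/FF)*(1-AA/EE)) * (1 - ((1-AA/(CC*DD))*(1-AA/(BB*DD))*(1-AA/(BB*CC)))/((1-AA/BB)*(1-AA/CC)*(1-AA/DD)) * ((1-EE)*(1-FF)*(1-GG))/((1-FF*GG/AA)*(1-EE*GG/AA)*(1-EE*FF/AA))) = 1 - (((1-BB)*(1-CC)*(1-DD)*(1-EE)*(1-FF)*(1-GG))/((1-AA/BB)*(1-AA/CC)*(1-AA/DD)*(1-AA/EE)*(1-AA/FF)*(1-AA/GG)))"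
    by (rule key) (use nzs bal' w1 dG in auto)
  have Pk1: "((qpoch b q (k + 1) * qpoch c r (k + 1) * qpoch d s (k + 1) * qpoch e t (k + 1) * qpoch f u (k + 1) * qpoch g v (k + 1)) / (qpoch (a / b) (w / q) (k + 1) * qpoch (a / c) (w / r) (k + 1) * qpoch (a / d) (w / s) (k + 1) * qpoch (a / e) (w / t) (k + 1) * qpoch (a / f) (w / u) (k + 1) * qpoch (a / g) (w / v) (k + 1))) = ((qpoch b q k * qpoch c r k * qpoch d s k * qpoch e t k * qpoch f u k * qpoch g v k) / (qpoch (a / b) (w / q) k * qpoch (a / c) (w / r) k * qpoch (a / d) (w / s) k * qpoch (a / e) (w / t) k * qpoch (a / f) (w / u) k * qpoch (a / g) (w / v) k)) * (((1-BB)*(1-CC)*(1-DD)*(1-EE)*(1-FF)*(1-GG))/((1-AA/BB)*(1-AA/CC)*(1-AA/DD)*(1-AA/EE)*(1-AA/FF)*(1-AA/GG)))"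
    unfolding recNBB recNCC recNDD recNEE recNFF recNGG recDBB recDCC recDDD recDEE recDFF recDGG
    by (rule split6d)
  have "((1 - a * w powi k) * (1 - a * (w / (t * u)) powi k / (e * f))
        * (1 - f * g * (u * v / w) powi k / a) * (1 - e * g * (t * v / w) powi k / a))
      / ((1 - g * (v / w) powi k / a) * (1 - e * f * g * (t * u * v / w) powi k / a)
        * (1 - a * (w / u) powi k / f) * (1 - a * (w / t) powi k / e))
      * ((qpoch b q k * qpoch c r k * qpoch d s k * qpoch e t k * qpoch f u k * qpoch g v k)
        / (qpoch (a / b) (w / q) k * qpoch (a / c) (w / r) k * qpoch (a / d) (w / s) k
           * qpoch (a / e) (w / t) k * qpoch (a / f) (w / u) k * qpoch (a / g) (w / v) k))
      * (1 - ((1 - a * (w / (r * s)) powi k / (c * d)) * (1 - a * (w / (q * s)) powi k / (b * d))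
                * (1 - a * (w / (q * r)) powi k / (b * c)))
             / ((1 - a * (w / q) powi k / b) * (1 - a * (w / r) powi k / c)
                * (1 - a * (w / s) powi k / d))
           * ((1 - e * t powi k) * (1 - f * u powi k) * (1 - g * v powi k))
             / ((1 - f * g * (u * v / w) powi k / a) * (1 - e * g * (t * v / w) powi k / a)
                * (1 - e * f * (t * u / w) powi k / a))) = ((1-AA)*(1-AA/(EE*FF))*(1-FF*GG/AA)*(1-EE*GG/AA))/((1-GG/AA)*(1-EE*FF*GG/AA)*(1-AA/FF)*(1-AA/EE)) * ((qpoch b q k * qpoch c r k * qpoch d s k * qpoch e t k * qpoch f u k * qpoch g v k) / (qpoch (a / b) (w / q) k * qpoch (a / c) (w / r) k * qpoch (a / d) (w / s) k * qpoch (a / e) (w / t) k * qpoch (a / f) (w / u) k * qpoch (a / g) (w / v) k)) * (1 - ((1-AA/(CC*DD))*(1-AA/(BB*DD))*(1-AA/(BB*CC)))/((1-AA/BB)*(1-AA/CC)*(1-AA/DD)) * ((1-EE)*(1-FF)*(1-GG))/((1-FF*GG/AA)*(1-EE*GG/AA)*(1-EE*FF/AA)))"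
    by (simp only: rfs)
  also have "\<dots> = ((qpoch b q k * qpoch c r k * qpoch d s k * qpoch e t k * qpoch f u k * qpoch g v k) / (qpoch (a / b) (w / q) k * qpoch (a / c) (w / r) k * qpoch (a / d) (w / s) k * qpoch (a / e) (w / t) k * qpoch (a / f) (w / u) k * qpoch (a / g) (w / v) k)) * (((1-AA)*(1-AA/(EE*FF))*(1-FF*GG/AA)*(1-EE*GG/AA))/((1-GG/AA)*(1-EE*FF*GG/AA)*(1-AA/FF)*(1-AA/EE)) * (1 - ((1-AA/(CC*DD))*(1-AA/(BB*DD))*(1-AA/(BB*CC)))/((1-AA/BB)*(1-AA/CC)*(1-AA/DD)) * ((1-EE)*(1-FF)*(1-GG))/((1-FF*GG/AA)*(1-EE*GG/AA)*(1-EE*FF/AA))))" by (rule mlc)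
  also have "\<dots> = ((qpoch b q k * qpoch c r k * qpoch d s k * qpoch e t k * qpoch f u k * qpoch g v k) / (qpoch (a / b) (w / q) k * qpoch (a / c) (w / r) k * qpoch (a / d) (w / s) k * qpoch (a / e) (w / t) k * qpoch (a / f) (w / u) k * qpoch (a / g) (w / v) k)) * (1 - (((1-BB)*(1-CC)*(1-DD)*(1-EE)*(1-FF)*(1-GG))/((1-AA/BB)*(1-AA/CC)*(1-AA/DD)*(1-AA/EE)*(1-AA/FF)*(1-AA/GG))))" by (simp only: K)
  also have "\<dots> = ((qpoch b q k * qpoch c r k * qpoch d s k * qpoch e t k * qpoch f u k * qpoch g v k) / (qpoch (a / b) (w / q) k * qpoch (a / c) (w / r) k * qpoch (a / d) (w / s) k * qpoch (a / e) (w / t) k * qpoch (a / f) (w / u) k * qpoch (a / g) (w / v) k)) - ((qpoch b q k * qpoch c r k * qpoch d s k * qpoch e t k * qpoch f u k * qpoch g v k) / (qpoch (a / b) (w / q) k * qpoch (a / c) (w / r) k * qpoch (a / d) (w / s) k * qpoch (a / e) (w / t) k * qpoch (a / f) (w / u) k * qpoch (a / g) (w / v) k)) * (((1-BB)*(1-CC)*(1-DD)*(1-EE)*(1-FF)*(1-GG))/((1-AA/BB)*(1-AA/CC)*(1-AA/DD)*(1-AA/EE)*(1-AA/FF)*(1-AA/GG)))" by (rule md)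
  also have "\<dots> = ((qpoch b q k * qpoch c r k * qpoch d s k * qpoch e t k * qpoch f u k * qpoch g v k) / (qpoch (a / b) (w / q) k * qpoch (a / c) (w / r) k * qpoch (a / d) (w / s) k * qpoch (a / e) (w / t) k * qpoch (a / f) (w / u) k * qpoch (a / g) (w / v) k)) - ((qpoch b q (k + 1) * qpoch c r (k + 1) * qpoch d s (k + 1) * qpoch e t (k + 1) * qpoch f u (k + 1) * qpoch g v (k + 1)) / (qpoch (a / b) (w / q) (k + 1) * qpoch (a / c) (w / r) (k + 1) * qpoch (a / d) (w / s) (k + 1) * qpoch (a / e) (w / t) (k + 1) * qpoch (a / f) (w / u) (k + 1) * qpoch (a / g) (w / v) (k + 1)))" by (simp only: Pk1)
  finally show ?thesis .
qed

lemma neg_lim: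
  fixes a b c d e f g q r s t u v w :: complex
  assumes nz: "a \<noteq> 0" "b \<noteq> 0" "c \<noteq> 0" "d \<noteq> 0" "e \<noteq> 0" "f \<noteq> 0" "g \<noteq> 0"
              "q \<noteq> 0" "r \<noteq> 0" "s \<noteq> 0" "t \<noteq> 0" "u \<noteq> 0" "v \<noteq> 0" "w \<noteq> 0"
    and bal: "a ^ 3 = b * c * d * e * f * g" "w ^ 3 = q * r * s * t * u * v"
    and small: "norm q < 1" "norm r < 1" "norm s < 1" "norm t < 1" "norm u < 1" "norm v < 1"
      "norm (w / q) < 1" "norm (w / r) < 1" "norm (w / s) < 1"
      "norm (w / t) < 1" "norm (w / u) < 1" "norm (w / v) < 1"
    and wd_rhs: "qinf (q / b) q \<noteq> 0" "qinf (r / c) r \<noteq> 0" "qinf (s / d) s \<noteq> 0"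
      "qinf (t / e) t \<noteq> 0" "qinf (u / f) u \<noteq> 0" "qinf (v / g) v \<noteq> 0"
      "qinf (a / b) (w / q) \<noteq> 0" "qinf (a / c) (w / r) \<noteq> 0" "qinf (a / d) (w / s) \<noteq> 0"
      "qinf (a / e) (w / t) \<noteq> 0" "qinf (a / f) (w / u) \<noteq> 0" "qinf (a / g) (w / v) \<noteq> 0"
  shows "(\<lambda>m. ((qpoch b q (- int m) * qpoch c r (- int m) * qpoch d s (- int m) * qpoch e t (- int m) * qpoch f u (- int m) * qpoch g v (- int m)) / (qpoch (a / b) (w / q) (- int m) * qpoch (a / c) (w / r) (- int m) * qpoch (a / d) (w / s) (- int m) * qpoch (a / e) (w / t) (- int m) * qpoch (a / f) (w / u) (- int m) * qpoch (a / g) (w / v) (- int m)))) \<longlonglongrightarrow> (qinf (b * w / (a * q)) (w / q) * qinf (c * w / (a * r)) (w / r) * qinf (d * w / (a * s)) (w / s)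
      * qinf (e * w / (a * t)) (w / t) * qinf (f * w / (a * u)) (w / u) * qinf (g * w / (a * v)) (w / v))
     / (qinf (q / b) q * qinf (r / c) r * qinf (s / d) s * qinf (t / e) t * qinf (u / f) u * qinf (v / g) v)"
proof -
  have rr: "(w / q) / (a / b) = b * w / (a * q)"
    "(w / r) / (a / c) = c * w / (a * r)"
    "(w / s) / (a / d) = d * w / (a * s)"
    "(w / t) / (a / e) = e * w / (a * t)"
    "(w / u) / (a / f) = f * w / (a * u)"
    "(w / v) / (a / g) = g * w / (a * v)"
    using nz by (simp_all add: field_simps)
  have ne: "a / b \<noteq> 0" "a / c \<noteq> 0" "a / d \<noteq> 0" "a / e \<noteq> 0" "a / f \<noteq> 0" "a / g \<noteq> 0"
    "w / q \<noteq> 0" "w / r \<noteq> 0" "w / s \<noteq> 0" "w / t \<noteq> 0" "w / u \<noteq> 0" "w / v \<noteq> 0" using nz by simp_all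
  have eq: "\<And>m. ((qpoch b q (- int m) * qpoch c r (- int m) * qpoch d s (- int m) * qpoch e t (- int m) * qpoch f u (- int m) * qpoch g v (- int m)) / (qpoch (a / b) (w / q) (- int m) * qpoch (a / c) (w / r) (- int m) * qpoch (a / d) (w / s) (- int m) * qpoch (a / e) (w / t) (- int m) * qpoch (a / f) (w / u) (- int m) * qpoch (a / g) (w / v) (- int m))) = ((\<Prod>j<m. (1 - (b * w / (a * q)) * (w / q) ^ j)) / (\<Prod>j<m. (1 - (q / b) * q ^ j))) * ((\<Prod>j<m. (1 - (c * w / (a * r)) * (w / r) ^ j)) / (\<Prod>j<m. (1 - (r / c) * r ^ j))) * ((\<Prod>j<m. (1 - (d * w / (a * s)) * (w / s) ^ j)) / (\<Prod>j<m. (1 - (s / d) * s ^ j))) * ((\<Prod>j<m. (1 - (e * w / (a * t)) * (w / t) ^ j)) / (\<Prod>j<m. (1 - (t / e) * t ^ j))) * ((\<Prod>j<m. (1 - (f * w / (a * u)) * (w / u) ^ j)) / (\<Prod>j<m. (1 - (u / f) * u ^ j))) * ((\<Prod>j<m. (1 - (g * w / (a * v)) * (w / v) ^ j)) / (\<Prod>j<m. (1 - (v / g) * v ^ j)))"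
  proof -
    fix m
    have pp: "(\<Prod>j\<in>{1..m}. (a / b) * q ^ j / (b * (w / q) ^ j)) * (\<Prod>j\<in>{1..m}. (a / c) * r ^ j / (c * (w / r) ^ j)) * (\<Prod>j\<in>{1..m}. (a / d) * s ^ j / (d * (w / s) ^ j)) * (\<Prod>j\<in>{1..m}. (a / e) * t ^ j / (e * (w / t) ^ j)) * (\<Prod>j\<in>{1..m}. (a / f) * u ^ j / (f * (w / u) ^ j)) * (\<Prod>j\<in>{1..m}. (a / g) * v ^ j / (g * (w / v) ^ j)) = 1"
      by (simp only: prod.distrib[symmetric] pre1[OF nz bal]) simp
    have "((qpoch b q (- int m) * qpoch c r (- int m) * qpoch d s (- int m) * qpoch e t (- int m) * qpoch f u (- int m) * qpoch g v (- int m)) / (qpoch (a / b) (w / q) (- int m) * qpoch (a / c) (w / r) (- int m) * qpoch (a / d) (w / s) (- int m) * qpoch (a / e) (w / t) (- int m) * qpoch (a / f) (w / u) (- int m) * qpoch (a / g) (w / v) (- int m))) = (qpoch b q (- int m) / qpoch (a / b) (w / q) (- int m)) * (qpoch c r (- int m) / qpoch (a / c) (w / r) (- int m)) * (qpoch d s (- int m) / qpoch (a / d) (w / s) (- int m)) * (qpoch e t (- int m) / qpoch (a / e) (w / t) (- int m)) * (qpoch f u (- int m) / qpoch (a / f) (w / u) (- int m)) * (qpoch g v (- int m) / qpoch (a / g) (w / v) (- int m))"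
      by (rule div6)
    also have "\<dots> = ((\<Prod>j\<in>{1..m}. (a / b) * q ^ j / (b * (w / q) ^ j)) * ((\<Prod>j<m. (1 - ((w / q) / (a / b)) * (w / q) ^ j)) / (\<Prod>j<m. (1 - (q / b) * q ^ j)))) * ((\<Prod>j\<in>{1..m}. (a / c) * r ^ j / (c * (w / r) ^ j)) * ((\<Prod>j<m. (1 - ((w / r) / (a / c)) * (w / r) ^ j)) / (\<Prod>j<m. (1 - (r / c) * r ^ j)))) * ((\<Prod>j\<in>{1..m}. (a / d) * s ^ j / (d * (w / s) ^ j)) * ((\<Prod>j<m. (1 - ((w / s) / (a / d)) * (w / s) ^ j)) / (\<Prod>j<m. (1 - (s / d) * s ^ j)))) * ((\<Prod>j\<in>{1..m}. (a / e) * t ^ j / (e * (w / t) ^ j)) * ((\<Prod>j<m. (1 - ((w / t) / (a / e)) * (w / t) ^ j)) / (\<Prod>j<m. (1 - (t / e) * t ^ j)))) * ((\<Prod>j\<in>{1..m}. (a / f) * u ^ j / (f * (w / u) ^ j)) * ((\<Prod>j<m. (1 - ((w / u) / (a / f)) * (w / u) ^ j)) / (\<Prod>j<m. (1 - (u / f) * u ^ j)))) * ((\<Prod>j\<in>{1..m}. (a / g) * v ^ j / (g * (w / v) ^ j)) * ((\<Prod>j<m. (1 - ((w / v) / (a / g)) * (w / v) ^ j)) / (\<Prod>j<m. (1 - (v / g) * v ^ j))))"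
      by (simp only: negpair[OF nz(2) nz(8) ne(1) ne(7)] negpair[OF nz(3) nz(9) ne(2) ne(8)] negpair[OF nz(4) nz(10) ne(3) ne(9)] negpair[OF nz(5) nz(11) ne(4) ne(10)] negpair[OF nz(6) nz(12) ne(5) ne(11)] negpair[OF nz(7) nz(13) ne(6) ne(12)])
    also have "\<dots> = ((\<Prod>j\<in>{1..m}. (a / b) * q ^ j / (b * (w / q) ^ j)) * (\<Prod>j\<in>{1..m}. (a / c) * r ^ j / (c * (w / r) ^ j)) * (\<Prod>j\<in>{1..m}. (a / d) * s ^ j / (d * (w / s) ^ j)) * (\<Prod>j\<in>{1..m}. (a / e) * t ^ j / (e * (w / t) ^ j)) * (\<Prod>j\<in>{1..m}. (a / f) * u ^ j / (f * (w / u) ^ j)) * (\<Prod>j\<in>{1..m}. (a / g) * v ^ j / (g * (w / v) ^ j))) * (((\<Prod>j<m. (1 - ((w / q) / (a / b)) * (w / q) ^ j)) / (\<Prod>j<m. (1 - (q / b) * q ^ j))) * ((\<Prod>j<m. (1 - ((w / r) / (a / c)) * (w / r) ^ j)) / (\<Prod>j<m. (1 - (r / c) * r ^ j))) * ((\<Prod>j<m. (1 - ((w / s) / (a / d)) * (w / s) ^ j)) / (\<Prod>j<m. (1 - (s / d) * s ^ j))) * ((\<Prod>j<m. (1 - ((w / t) / (a / e)) * (w / t) ^ j)) / (\<Prod>j<m. (1 - (t / e) * t ^ j))) * ((\<Prod>j<m. (1 - ((w / u) / (a / f)) * (w / u) ^ j)) / (\<Prod>j<m. (1 - (u / f) * u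 ^ j))) * ((\<Prod>j<m. (1 - ((w / v) / (a / g)) * (w / v) ^ j)) / (\<Prod>j<m. (1 - (v / g) * v ^ j))))"
      by (rule split6)
    also have "\<dots> = ((\<Prod>j<m. (1 - (b * w / (a * q)) * (w / q) ^ j)) / (\<Prod>j<m. (1 - (q / b) * q ^ j))) * ((\<Prod>j<m. (1 - (c * w / (a * r)) * (w / r) ^ j)) / (\<Prod>j<m. (1 - (r / c) * r ^ j))) * ((\<Prod>j<m. (1 - (d * w / (a * s)) * (w / s) ^ j)) / (\<Prod>j<m. (1 - (s / d) * s ^ j))) * ((\<Prod>j<m. (1 - (e * w / (a * t)) * (w / t) ^ j)) / (\<Prod>j<m. (1 - (t / e) * t ^ j))) * ((\<Prod>j<m. (1 - (f * w / (a * u)) * (w / u) ^ j)) / (\<Prod>j<m. (1 - (u / f) * u ^ j))) * ((\<Prod>j<m. (1 - (g * w / (a * v)) * (w / v) ^ j)) / (\<Prod>j<m. (1 - (v / g) * v ^ j)))"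
      by (simp only: pp mult_1_left rr)
    finally show "((qpoch b q (- int m) * qpoch c r (- int m) * qpoch d s (- int m) * qpoch e t (- int m) * qpoch f u (- int m) * qpoch g v (- int m)) / (qpoch (a / b) (w / q) (- int m) * qpoch (a / c) (w / r) (- int m) * qpoch (a / d) (w / s) (- int m) * qpoch (a / e) (w / t) (- int m) * qpoch (a / f) (w / u) (- int m) * qpoch (a / g) (w / v) (- int m))) = ((\<Prod>j<m. (1 - (b * w / (a * q)) * (w / q) ^ j)) / (\<Prod>j<m. (1 - (q / b) * q ^ j))) * ((\<Prod>j<m. (1 - (c * w / (a * r)) * (w / r) ^ j)) / (\<Prod>j<m. (1 - (r / c) * r ^ j))) * ((\<Prod>j<m. (1 - (d * w / (a * s)) * (w / s) ^ j)) / (\<Prod>j<m. (1 - (s / d) * s ^ j))) * ((\<Prod>j<m. (1 - (e * w / (a * t)) * (w / t) ^ j)) / (\<Prod>j<m. (1 - (t / e) * t ^ j))) * ((\<Prod>j<m. (1 - (f * w / (a * u)) * (w / u) ^ j)) / (\<Prod>j<m. (1 - (u / f) * u ^ j))) * ((\<Prod>j<m. (1 - (g * w / (a * v)) * (w / v) ^ j)) / (\<Prod>j<m. (1 - (v / g) * v ^ j)))" .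
  qed
  have L: "(\<lambda>m. ((\<Prod>j<m. (1 - (b * w / (a * q)) * (w / q) ^ j)) / (\<Prod>j<m. (1 - (q / b) * q ^ j))) * ((\<Prod>j<m. (1 - (c * w / (a * r)) * (w / r) ^ j)) / (\<Prod>j<m. (1 - (r / c) * r ^ j))) * ((\<Prod>j<m. (1 - (d * w / (a * s)) * (w / s) ^ j)) / (\<Prod>j<m. (1 - (s / d) * s ^ j))) * ((\<Prod>j<m. (1 - (e * w / (a * t)) * (w / t) ^ j)) / (\<Prod>j<m. (1 - (t / e) * t ^ j))) * ((\<Prod>j<m. (1 - (f * w / (a * u)) * (w / u) ^ j)) / (\<Prod>j<m. (1 - (u / f) * u ^ j))) * ((\<Prod>j<m. (1 - (g * w / (a * v)) * (w / v) ^ j)) / (\<Prod>j<m. (1 - (v / g) * v ^ j)))) \<longlonglongrightarrow> (qinf (b * w / (a * q)) (w / q) / qinf (q / b) q) * (qinf (c * w / (a * r)) (w / r) / qinf (r / c) r) * (qinf (d * w / (a * s)) (w / s) / qinf (s / d) s) * (qinf (e * w / (a * t)) (w / t) / qinf (t / e) t) * (qinf (f * w / (a * u)) (w / u) / qinf (u / f) u) * (qinf (g * w / (a * v)) (w / v) / qinf (v / g) v)"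
    by (intro tendsto_mult6 tendsto_divide qinf_lim) (use small wd_rhs in auto)
  show ?thesis unfolding eq unfolding div6 by (rule L)
qed

theorem mainTheorem4:
  fixes a b c d e f g q r s t u v w :: complex
  assumes nz: "a \<noteq> 0" "b \<noteq> 0" "c \<noteq> 0" "d \<noteq> 0" "e \<noteq> 0" "f \<noteq> 0" "g \<noteq> 0"
              "q \<noteq> 0" "r \<noteq> 0" "s \<noteq> 0" "t \<noteq> 0" "u \<noteq> 0" "v \<noteq> 0" "w \<noteq> 0"
    and bal: "a ^ 3 = b * c * d * e * f * g" "w ^ 3 = q * r * s * t * u * v"
    and small: "norm q < 1" "norm r < 1" "norm s < 1" "norm t < 1" "norm u < 1" "norm v < 1"
      "norm (w / q) < 1" "norm (w / r) < 1" "norm (w / s) < 1"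
      "norm (w / t) < 1" "norm (w / u) < 1" "norm (w / v) < 1"
    and wd_num: "\<And>k::int. qpoch_ok b q k \<and> qpoch_ok c r k \<and> qpoch_ok d s k \<and>
                           qpoch_ok e t k \<and> qpoch_ok f u k \<and> qpoch_ok g v k"
    and wd_den: "\<And>k::int.
        qpoch_ok (a / b) (w / q) k \<and> qpoch (a / b) (w / q) k \<noteq> 0 \<and>
        qpoch_ok (a / c) (w / r) k \<and> qpoch (a / c) (w / r) k \<noteq> 0 \<and>
        qpoch_ok (a / d) (w / s) k \<and> qpoch (a / d) (w / s) k \<noteq> 0 \<and>
        qpoch_ok (a / e) (w / t) k \<and> qpoch (a / e) (w / t) k \<noteq> 0 \<and>
        qpoch_ok (a / f) (w / u) k \<and> qpoch (a / f) (w / u) k \<noteq> 0 \<and>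
        qpoch_ok (a / g) (w / v) k \<and> qpoch (a / g) (w / v) k \<noteq> 0"
    and wd_fac: "\<And>k::int.
        1 - g * (v / w) powi k / a \<noteq> 0 \<and>
        1 - e * f * g * (t * u * v / w) powi k / a \<noteq> 0 \<and>
        1 - a * (w / u) powi k / f \<noteq> 0 \<and>
        1 - a * (w / t) powi k / e \<noteq> 0 \<and>
        1 - a * (w / q) powi k / b \<noteq> 0 \<and>
        1 - a * (w / r) powi k / c \<noteq> 0 \<and>
        1 - a * (w / s) powi k / d \<noteq> 0 \<and>
        1 - f * g * (u * v / w) powi k / a \<noteq> 0 \<and>
        1 - e * g * (t * v / w) powi k / a \<noteq> 0 \<and>
        1 - e * f * (t * u / w) powi k / a \<noteq> 0"
    and wd_rhs: "qinf (q / b) q \<noteq> 0" "qinf (r / c) r \<noteq> 0" "qinf (s / d) s \<noteq> 0"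
      "qinf (t / e) t \<noteq> 0" "qinf (u / f) u \<noteq> 0" "qinf (v / g) v \<noteq> 0"
      "qinf (a / b) (w / q) \<noteq> 0" "qinf (a / c) (w / r) \<noteq> 0" "qinf (a / d) (w / s) \<noteq> 0"
      "qinf (a / e) (w / t) \<noteq> 0" "qinf (a / f) (w / u) \<noteq> 0" "qinf (a / g) (w / v) \<noteq> 0"
  shows "bilateral_sums
    (\<lambda>k::int.
      ((1 - a * w powi k) * (1 - a * (w / (t * u)) powi k / (e * f))
        * (1 - f * g * (u * v / w) powi k / a) * (1 - e * g * (t * v / w) powi k / a))
      / ((1 - g * (v / w) powi k / a) * (1 - e * f * g * (t * u * v / w) powi k / a)
        * (1 - a * (w / u) powi k / f) * (1 - a * (w / t) powi k / e))
      * ((qpoch b q k * qpoch c r k * qpoch d s k * qpoch e t k * qpoch f u k * qpoch g v k)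
        / (qpoch (a / b) (w / q) k * qpoch (a / c) (w / r) k * qpoch (a / d) (w / s) k
           * qpoch (a / e) (w / t) k * qpoch (a / f) (w / u) k * qpoch (a / g) (w / v) k))
      * (1 - ((1 - a * (w / (r * s)) powi k / (c * d)) * (1 - a * (w / (q * s)) powi k / (b * d))
                * (1 - a * (w / (q * r)) powi k / (b * c)))
             / ((1 - a * (w / q) powi k / b) * (1 - a * (w / r) powi k / c)
                * (1 - a * (w / s) powi k / d))
           * ((1 - e * t powi k) * (1 - f * u powi k) * (1 - g * v powi k))
             / ((1 - f * g * (u * v / w) powi k / a) * (1 - e * g * (t * v / w) powi k / a)
                * (1 - e * f * (t * u / w) powi k / a))))
    ((qinf (b * w / (a * q)) (w / q) * qinf (c * w / (a * r)) (w / r) * qinf (d * w / (a * s)) (w / s)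
      * qinf (e * w / (a * t)) (w / t) * qinf (f * w / (a * u)) (w / u) * qinf (g * w / (a * v)) (w / v))
     / (qinf (q / b) q * qinf (r / c) r * qinf (s / d) s * qinf (t / e) t * qinf (u / f) u * qinf (v / g) v)
     - (qinf b q * qinf c r * qinf d s * qinf e t * qinf f u * qinf g v)
     / (qinf (a / b) (w / q) * qinf (a / c) (w / r) * qinf (a / d) (w / s)
        * qinf (a / e) (w / t) * qinf (a / f) (w / u) * qinf (a / g) (w / v)))"
proof (rule bilateral_tele[where P = "\<lambda>k. ((qpoch b q k * qpoch c r k * qpoch d s k * qpoch e t k * qpoch f u k * qpoch g v k) / (qpoch (a / b) (w / q) k * qpoch (a / c) (w / r) k * qpoch (a / d) (w / s) k * qpoch (a / e) (w / t) k * qpoch (a / f) (w / u) k * qpoch (a / g) (w / v) k))"])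
  fix k :: int
  show "((1 - a * w powi k) * (1 - a * (w / (t * u)) powi k / (e * f))
        * (1 - f * g * (u * v / w) powi k / a) * (1 - e * g * (t * v / w) powi k / a))
      / ((1 - g * (v / w) powi k / a) * (1 - e * f * g * (t * u * v / w) powi k / a)
        * (1 - a * (w / u) powi k / f) * (1 - a * (w / t) powi k / e))
      * ((qpoch b q k * qpoch c r k * qpoch d s k * qpoch e t k * qpoch f u k * qpoch g v k)
        / (qpoch (a / b) (w / q) k * qpoch (a / c) (w / r) k * qpoch (a / d) (w / s) k
           * qpoch (a / e) (w / t) k * qpoch (a / f) (w / u) k * qpoch (a / g) (w / v) k))
      * (1 - ((1 - a * (w / (r * s)) powi k / (c * d)) * (1 - a * (w / (q * s)) powi k / (b * d))
                * (1 - a * (w / (q * r)) powi k / (b * c)))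
             / ((1 - a * (w / q) powi k / b) * (1 - a * (w / r) powi k / c)
                * (1 - a * (w / s) powi k / d))
           * ((1 - e * t powi k) * (1 - f * u powi k) * (1 - g * v powi k))
             / ((1 - f * g * (u * v / w) powi k / a) * (1 - e * g * (t * v / w) powi k / a)
                * (1 - e * f * (t * u / w) powi k / a))) = ((qpoch b q k * qpoch c r k * qpoch d s k * qpoch e t k * qpoch f u k * qpoch g v k) / (qpoch (a / b) (w / q) k * qpoch (a / c) (w / r) k * qpoch (a / d) (w / s) k * qpoch (a / e) (w / t) k * qpoch (a / f) (w / u) k * qpoch (a / g) (w / v) k)) - ((qpoch b q (k + 1) * qpoch c r (k + 1) * qpoch d s (k + 1) * qpoch e t (k + 1) * qpoch f u (k + 1) * qpoch g v (k + 1)) / (qpoch (a / b) (w / q) (k + 1) * qpoch (a / c) (w / r) (k + 1) * qpoch (a / d) (w / s) (k + 1) * qpoch (a / e) (w / t) (k + 1) * qpoch (a / f) (w / u) (k + 1) * qpoch (a / g) (w / v) (k + 1)))"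
    by (rule step_lemma[OF nz bal wd_num wd_den wd_fac])
next
  show "(\<lambda>n. ((qpoch b q (int n) * qpoch c r (int n) * qpoch d s (int n) * qpoch e t (int n) * qpoch f u (int n) * qpoch g v (int n)) / (qpoch (a / b) (w / q) (int n) * qpoch (a / c) (w / r) (int n) * qpoch (a / d) (w / s) (int n) * qpoch (a / e) (w / t) (int n) * qpoch (a / f) (w / u) (int n) * qpoch (a / g) (w / v) (int n)))) \<longlonglongrightarrow> (qinf b q * qinf c r * qinf d s * qinf e t * qinf f u * qinf g v)
     / (qinf (a / b) (w / q) * qinf (a / c) (w / r) * qinf (a / d) (w / s)
        * qinf (a / e) (w / t) * qinf (a / f) (w / u) * qinf (a / g) (w / v))"
    by (intro tendsto_divide tendsto_mult qpoch_pos_lim) (use small wd_rhs in auto)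
next
  show "(\<lambda>m. ((qpoch b q (- int m) * qpoch c r (- int m) * qpoch d s (- int m) * qpoch e t (- int m) * qpoch f u (- int m) * qpoch g v (- int m)) / (qpoch (a / b) (w / q) (- int m) * qpoch (a / c) (w / r) (- int m) * qpoch (a / d) (w / s) (- int m) * qpoch (a / e) (w / t) (- int m) * qpoch (a / f) (w / u) (- int m) * qpoch (a / g) (w / v) (- int m)))) \<longlonglongrightarrow> (qinf (b * w / (a * q)) (w / q) * qinf (c * w / (a * r)) (w / r) * qinf (d * w / (a * s)) (w / s)
      * qinf (e * w / (a * t)) (w / t) * qinf (f * w / (a * u)) (w / u) * qinf (g * w / (a * v)) (w / v))
     / (qinf (q / b) q * qinf (r / c) r * qinf (s / d) s * qinf (t / e) t * qinf (u / f) u * qinf (v / g) v)"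
    by (rule neg_lim[OF nz bal small wd_rhs])
qed

end
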